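(* Suppose $G$ consists of a single strongly connected component and at least one vertex of $G$ has out-degree at least two. Then the flow $\psi$ on $\Delta$ has sensitive dependence on initial conditions.
   Context: $G$ is a finite directed graph (loops allowed) with vertex set $V$. $\Omega$ is the set of bi-infinite paths in $G$, i.e. sequences $(x_i)_{i\in\mathbb Z}\in V^{\mathbb Z}$ such that for every $i$ there is an edge from $x_i$ to $x_{i+1}$. Fix $h>0$. $\bar\Delta$ is the set of functions $x:\mathbb R\to V$ that are constant on each interval $[nh,(n+1)h)$, $n\in\mathbb Z$, and satisfy $(x(ih))_{i\in\mathbb Z}\in\Omega$. $\Delta=\{x(\cdot+t): x\in\bar\Delta,\ t\in\mathbb R\}$, with metric $d(x,y)=\sum_{i\in\mathbb Z}4^{-|i|}\frac1h\int_{ih}^{(i+1)h}\delta(x,y,t)\,dt$, where $\delta(x,y,t)=1$ if $x(t)\ne y(t)$ and $0$ otherwise. The flow $\psi:\mathbb R\times\Delta\to\Delta$ is $\psi(t,x)=x(\cdot+t)$. "$G$ consists of a single strongly connected component" means that for all $u,v\in V$ (including $u=v$) there is a directed path of positive length from $u$ to $v$. A flow $\Phi$ on a metric space $X$ has sensitive dependence on initial conditions if there is $\delta>0$ such that for every $x\in X$ and every neighborhood $B$ of $x$ there are $y\in B$ and $t>0$ with $d(\Phi_t(x),\Phi_t(y))>\delta$. *)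

theory Defs
  imports "HOL-Analysis.Analysis"
begin

definition strongly_connected_single :: "'v set \<Rightarrow> ('v \<times> 'v) set \<Rightarrow> bool" where
  "strongly_connected_single V E \<longleftrightarrow> (\<forall>u\<in>V. \<forall>v\<in>V. (u, v) \<in> E\<^sup>+)"

definition out_degree :: "('v \<times> 'v) set \<Rightarrow> 'v \<Rightarrow> nat" where
  "out_degree E v = card {w. (v, w) \<in> E}"

definition bi_paths :: "'v set \<Rightarrow> ('v \<times> 'v) set \<Rightarrow> (int \<Rightarrow> 'v) set" where
  "bi_paths V E = {x. (\<forall>i. x i \<in> V) \<and> (\<forall>i. (x i, x (i + 1)) \<in> E)}"

definition Delta_bar :: "'v set \<Rightarrow> ('v \<times> 'v) set \<Rightarrow> real \<Rightarrow> (real \<Rightarrow> 'v) set" where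
  "Delta_bar V E h = {x. (\<forall>n::int. \<forall>t. real_of_int n * h \<le> t \<and> t < real_of_int (n + 1) * h
        \<longrightarrow> x t = x (real_of_int n * h))
     \<and> (\<lambda>i::int. x (real_of_int i * h)) \<in> bi_paths V E}"

definition Delta :: "'v set \<Rightarrow> ('v \<times> 'v) set \<Rightarrow> real \<Rightarrow> (real \<Rightarrow> 'v) set" where
  "Delta V E h = {(\<lambda>s. x (s + t)) | x t. x \<in> Delta_bar V E h}"

definition dist_Delta :: "real \<Rightarrow> (real \<Rightarrow> 'v) \<Rightarrow> (real \<Rightarrow> 'v) \<Rightarrow> real" where
  "dist_Delta h x y = (\<Sum>\<^sub>\<infinity>i::int. (1/4) ^ nat \<bar>i\<bar> * ((1 / h) *
      integral {real_of_int i * h .. real_of_int (i + 1) * h} (\<lambda>t. if x t \<noteq> y t then 1 else 0)))"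

definition psi :: "real \<Rightarrow> (real \<Rightarrow> 'v) \<Rightarrow> (real \<Rightarrow> 'v)" where
  "psi t x = (\<lambda>s. x (s + t))"

text \<open>A neighbourhood B of x contains an open ball {y \<in> X. d x y < e}, so quantifying over
  neighbourhoods amounts to quantifying over such balls.\<close>
definition sensitive_dependence ::
  "'a set \<Rightarrow> ('a \<Rightarrow> 'a \<Rightarrow> real) \<Rightarrow> (real \<Rightarrow> 'a \<Rightarrow> 'a) \<Rightarrow> bool" where
  "sensitive_dependence X d Phi \<longleftrightarrow>
     (\<exists>\<delta>>0. \<forall>x\<in>X. \<forall>B. (\<exists>e>0. {y\<in>X. d x y < e} \<subseteq> B) \<longrightarrow>
        (\<exists>y\<in>B \<inter> X. \<exists>t>0. d (Phi t x) (Phi t y) > \<delta>))"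

end

theory Submission
  imports Defs
begin

lemma geo_fin:
  fixes c :: real
  assumes "0 \<le> c" "c < 1" "finite F" "inj_on g F"
  shows "(\<Sum>i\<in>F. c ^ (g i)) \<le> 1 / (1 - c)"
proof -
  have "(\<Sum>i\<in>F. c ^ (g i)) = (\<Sum>n\<in>g ` F. c ^ n)" using assms by (simp add: sum.reindex)
  also have "\<dots> \<le> (\<Sum>n. c ^ n)"
    by (rule sum_le_suminf) (use assms in \<open>auto intro: summable_geometric\<close>)
  also have "\<dots> = 1 / (1 - c)" using suminf_geometric[of c] assms by auto
  finally show ?thesis .
qed

lemma nat_abs_inj:
  fixes x y :: int
  assumes "nat \<bar>x\<bar> = nat \<bar>y\<bar>" "(x \<ge> 0 \<and> y \<ge> 0) \<or> (x < 0 \<and> y < 0)"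
  shows "x = y"
  using assms by (auto simp: eq_nat_nat_iff)

lemma int_fin:
  assumes "finite (F :: int set)"
  shows "(\<Sum>i\<in>F. (1/4::real) ^ nat \<bar>i\<bar>) \<le> 8/3"
proof -
  have eq: "F = (F \<inter> {0..}) \<union> (F \<inter> {..<0})" by auto
  have "(\<Sum>i\<in>F. (1/4::real) ^ nat \<bar>i\<bar>) = (\<Sum>i\<in>F \<inter> {0..}. (1/4::real) ^ nat \<bar>i\<bar>) + (\<Sum>i\<in>F \<inter> {..<0}. (1/4::real) ^ nat \<bar>i\<bar>)"
    by (subst eq, rule sum.union_disjoint) (use assms in auto)
  also have "\<dots> \<le> 4/3 + 4/3"
  proof (rule add_mono)
    show "(\<Sum>i\<in>F \<inter> {0..}. (1/4::real) ^ nat \<bar>i\<bar>) \<le> 4/3"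
      proof -
      have "inj_on (\<lambda>i. nat \<bar>i\<bar>) (F \<inter> {0..})"
      proof (rule inj_onI)
        fix a b assume "a \<in> F \<inter> {0..}" "b \<in> F \<inter> {0..}" "nat \<bar>a\<bar> = nat \<bar>b\<bar>"
        then show "a = b" using nat_abs_inj[of a b] by auto
      qed
      then have "(\<Sum>i\<in>F \<inter> {0..}. (1/4::real) ^ nat \<bar>i\<bar>) \<le> 1 / (1 - 1/4)"
        by (intro geo_fin) (use assms in auto)
      then show ?thesis by simp
    qed
    show "(\<Sum>i\<in>F \<inter> {..<0}. (1/4::real) ^ nat \<bar>i\<bar>) \<le> 4/3"
      proof -
      have "inj_on (\<lambda>i. nat \<bar>i\<bar>) (F \<inter> {..<0})"
      proof (rule inj_onI)
        fix a b assume "a \<in> F \<inter> {..<0}" "b \<in> F \<inter> {..<0}" "nat \<bar>a\<bar> = nat \<bar>b\<bar>"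
        then show "a = b" using nat_abs_inj[of a b] by auto
      qed
      then have "(\<Sum>i\<in>F \<inter> {..<0}. (1/4::real) ^ nat \<bar>i\<bar>) \<le> 1 / (1 - 1/4)"
        by (intro geo_fin) (use assms in auto)
      then show ?thesis by simp
    qed
  qed
  finally show ?thesis by simp
qed

lemma tail_fin:
  assumes "finite (F :: int set)" "\<And>i. i \<in> F \<Longrightarrow> i \<ge> int L"
  shows "(\<Sum>i\<in>F. (1/4::real) ^ nat \<bar>i\<bar>) \<le> 2 * (1/2) ^ L"
proof -
  have "(\<Sum>i\<in>F. (1/4::real) ^ nat \<bar>i\<bar>) \<le> (\<Sum>i\<in>F. (1/2) ^ L * (1/2::real) ^ nat \<bar>i\<bar>)"
  proof (rule sum_mono)
    fix i assume i: "i \<in> F"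
    have "(1/4::real) ^ nat \<bar>i\<bar> = (1/2) ^ nat \<bar>i\<bar> * (1/2) ^ nat \<bar>i\<bar>"
      by (simp add: power_mult_distrib[symmetric])
    also have "\<dots> \<le> (1/2) ^ L * (1/2::real) ^ nat \<bar>i\<bar>"
      by (rule mult_right_mono, rule power_decreasing) (use assms(2)[OF i] in auto)
    finally show "(1/4::real) ^ nat \<bar>i\<bar> \<le> (1/2) ^ L * (1/2::real) ^ nat \<bar>i\<bar>" .
  qed
  also have "\<dots> = (1/2) ^ L * (\<Sum>i\<in>F. (1/2::real) ^ nat \<bar>i\<bar>)" by (simp add: sum_distrib_left)
  also have "\<dots> \<le> (1/2) ^ L * 2"
  proof -
    have "inj_on (\<lambda>i. nat \<bar>i\<bar>) F"
    proof (rule inj_onI)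
      fix a b assume "a \<in> F" "b \<in> F" "nat \<bar>a\<bar> = nat \<bar>b\<bar>"
      then show "a = b" using nat_abs_inj[of a b] assms(2)[of a] assms(2)[of b] by auto
    qed
    then have "(\<Sum>i\<in>F. (1/2::real) ^ nat \<bar>i\<bar>) \<le> 2"
      using geo_fin[of "1/2" F "\<lambda>i. nat \<bar>i\<bar>"] assms by auto
    then show ?thesis by simp
  qed
  finally show ?thesis by simp
qed

lemma integral_ind_bounds:
  fixes a b :: real assumes "a \<le> b"
  shows "0 \<le> integral {a..b} (\<lambda>t. if P t then 1 else 0::real)"
    and "integral {a..b} (\<lambda>t. if P t then 1 else 0::real) \<le> b - a"
proof -
  let ?f = "\<lambda>t. if P t then 1 else 0::real"
  show "0 \<le> integral {a..b} ?f"
    by (cases "?f integrable_on {a..b}") (auto intro: integral_nonneg simp: not_integrable_integral)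
  show "integral {a..b} ?f \<le> b - a"
  proof (cases "?f integrable_on {a..b}")
    case True
    have "integral {a..b} ?f \<le> integral {a..b} (\<lambda>_. 1::real)"
      by (rule integral_le) (use True in auto)
    then show ?thesis using assms by simp
  next
    case False then show ?thesis using assms by (simp add: not_integrable_integral)
  qed
qed

definition TT :: "real \<Rightarrow> (real \<Rightarrow> 'v) \<Rightarrow> (real \<Rightarrow> 'v) \<Rightarrow> int \<Rightarrow> real" where
  "TT h x y i = (1/4) ^ nat \<bar>i\<bar> * ((1 / h) *
      integral {real_of_int i * h .. real_of_int (i + 1) * h} (\<lambda>t. if x t \<noteq> y t then 1 else 0))"

lemma aux_mult:
  fixes q c :: real
  assumes "0 \<le> q" "q \<le> 1" "0 \<le> c"
  shows "0 \<le> c * q" "c * q \<le> c"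
  using assms by (auto intro: mult_left_le)

lemma TT_bounds:
  assumes "h > 0"
  shows "0 \<le> TT h x y i" "TT h x y i \<le> (1/4) ^ nat \<bar>i\<bar>"
proof -
  let ?I = "integral {real_of_int i * h .. real_of_int (i + 1) * h} (\<lambda>t. if x t \<noteq> y t then 1 else 0::real)"
  have le: "real_of_int i * h \<le> real_of_int (i + 1) * h" using assms by (simp add: distrib_right)
  have "0 \<le> ?I" "?I \<le> real_of_int (i + 1) * h - real_of_int i * h"
    using integral_ind_bounds[OF le, of "\<lambda>t. x t \<noteq> y t"] by blast+
  then have "0 \<le> (1/h) * ?I" "(1/h) * ?I \<le> 1"
    using assms by (auto simp: distrib_right field_simps)
  then show "0 \<le> TT h x y i" "TT h x y i \<le> (1/4) ^ nat \<bar>i\<bar>"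
    unfolding TT_def using aux_mult[of "(1/h) * ?I" "(1/4) ^ nat \<bar>i\<bar>"] by auto
qed

lemma TT_summable:
  assumes "h > 0"
  shows "TT h x y summable_on UNIV"
proof (rule nonneg_bdd_above_summable_on)
  show "\<And>i. i \<in> UNIV \<Longrightarrow> 0 \<le> TT h x y i" using TT_bounds[OF assms] by blast
  show "bdd_above (sum (TT h x y) ` {F. F \<subseteq> UNIV \<and> finite F})"
  proof (rule bdd_aboveI2)
    fix F :: "int set" assume "F \<in> {F. F \<subseteq> UNIV \<and> finite F}"
    then have "finite F" by simp
    have "sum (TT h x y) F \<le> (\<Sum>i\<in>F. (1/4::real) ^ nat \<bar>i\<bar>)"
      by (rule sum_mono) (use TT_bounds[OF assms] in blast)
    also have "\<dots> \<le> 8/3" by (rule int_fin[OF \<open>finite F\<close>])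
    finally show "sum (TT h x y) F \<le> 8/3" .
  qed
qed

lemma dist_TT: "dist_Delta h x y = infsum (TT h x y) UNIV"
  unfolding dist_Delta_def TT_def ..

lemma dist_ge1:
  assumes "h > 0" "\<And>s. 0 \<le> s \<Longrightarrow> s < h \<Longrightarrow> x s \<noteq> y s"
  shows "dist_Delta h x y \<ge> 1"
proof -
  have "integral {0..h} (\<lambda>t. if x t \<noteq> y t then 1 else 0::real) = integral {0..h} (\<lambda>_. 1::real)"
    by (rule integral_spike[of "{h}"]) (use assms(2) in auto)
  then have "TT h x y 0 = 1" using assms(1) unfolding TT_def by simp
  have "infsum (TT h x y) {0} \<le> infsum (TT h x y) UNIV"
    by (rule infsum_mono2) (use TT_summable[OF assms(1)] TT_bounds[OF assms(1)] in auto)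
  then show ?thesis using \<open>TT h x y 0 = 1\<close> by (simp add: dist_TT)
qed

lemma dist_small:
  assumes "h > 0" "\<And>i s. i < int L \<Longrightarrow> real_of_int i * h \<le> s \<Longrightarrow> s \<le> real_of_int (i + 1) * h \<Longrightarrow> x s = y s"
  shows "dist_Delta h x y \<le> 2 * (1/2) ^ L"
  unfolding dist_TT
proof (rule infsum_le_finite_sums[OF TT_summable[OF assms(1)]])
  fix F :: "int set" assume F: "finite F" "F \<subseteq> UNIV"
  have z: "TT h x y i = 0" if "i < int L" for i
  proof -
    have "integral {real_of_int i * h .. real_of_int (i + 1) * h} (\<lambda>t. if x t \<noteq> y t then 1 else 0::real)
        = integral {real_of_int i * h .. real_of_int (i + 1) * h} (\<lambda>_. 0::real)"
      by (rule integral_cong) (use assms(2) that in auto)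
    then show ?thesis unfolding TT_def by simp
  qed
  have "sum (TT h x y) F = sum (TT h x y) (F \<inter> {i. i \<ge> int L})"
  proof (rule sum.mono_neutral_right)
    show "\<forall>i\<in>F - F \<inter> {i. i \<ge> int L}. TT h x y i = 0"
    proof
      fix i assume "i \<in> F - F \<inter> {i. i \<ge> int L}"
      then have "i < int L" by auto
      then show "TT h x y i = 0" by (rule z)
    qed
  qed (use F in auto)
  also have "\<dots> \<le> (\<Sum>i\<in>F \<inter> {i. i \<ge> int L}. (1/4::real) ^ nat \<bar>i\<bar>)"
    by (rule sum_mono) (use TT_bounds[OF assms(1)] in blast)
  also have "\<dots> \<le> 2 * (1/2) ^ L" by (rule tail_fin) (use F in auto)
  finally show "sum (TT h x y) F \<le> 2 * (1/2) ^ L" .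
qed

lemma succ_exists:
  assumes "strongly_connected_single V E" "E \<subseteq> V \<times> V" "v \<in> V"
  shows "\<exists>w\<in>V. (v, w) \<in> E"
proof -
  have "(v, v) \<in> E\<^sup>+" using assms unfolding strongly_connected_single_def by blast
  then obtain c where "(v, c) \<in> E" by (meson tranclD)
  then show ?thesis using assms(2) by blast
qed

lemma fwd_path:
  assumes "strongly_connected_single V E" "E \<subseteq> V \<times> V" "w \<in> V"
  shows "\<exists>F. F 0 = w \<and> (\<forall>n. F n \<in> V \<and> (F n, F (Suc n)) \<in> E)"
proof -
  obtain sc where sc: "\<And>v. v \<in> V \<Longrightarrow> sc v \<in> V \<and> (v, sc v) \<in> E"
    using succ_exists[OF assms(1,2)] by metis
  define F where "F n = (sc ^^ n) w" for n
  have V: "F n \<in> V" for n by (induction n) (auto simp: F_def assms(3) sc)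
  have "(F n, F (Suc n)) \<in> E" for n using sc[OF V[of n]] by (simp add: F_def)
  moreover have "F 0 = w" by (simp add: F_def)
  ultimately show ?thesis using V by blast
qed

lemma two_elems:
  assumes "2 \<le> card S"
  shows "\<exists>a\<in>S. \<exists>b\<in>S. a \<noteq> b"
proof -
  have "finite S" using assms by (metis card.infinite not_numeral_le_zero)
  then show ?thesis using assms card_le_Suc0_iff_eq[of S] by auto
qed

lemma branch:
  assumes "E \<subseteq> V \<times> V" "strongly_connected_single V E" "\<exists>v\<in>V. out_degree E v \<ge> 2" "u \<in> V"
  shows "\<exists>P1 P2 k. P1 0 = u \<and> P2 0 = u \<and> (\<forall>n. P1 n \<in> V \<and> (P1 n, P1 (Suc n)) \<in> E)
     \<and> (\<forall>n. P2 n \<in> V \<and> (P2 n, P2 (Suc n)) \<in> E) \<and> P1 k \<noteq> P2 k"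
proof -
  obtain v where v: "v \<in> V" "out_degree E v \<ge> 2" using assms(3) by blast
  obtain w1 w2 where w: "(v, w1) \<in> E" "(v, w2) \<in> E" "w1 \<noteq> w2"
    using two_elems[of "{w. (v, w) \<in> E}"] v(2) unfolding out_degree_def by auto
  have "(u, v) \<in> E\<^sup>+" using assms(2,4) v(1) unfolding strongly_connected_single_def by blast
  then obtain n where "n > 0" "(u, v) \<in> E ^^ n" by (auto simp: trancl_power)
  then obtain q where q: "q 0 = u" "q n = v" "\<And>i. i < n \<Longrightarrow> (q i, q (Suc i)) \<in> E"
    by (auto simp: relpow_fun_conv)
  have qV: "q i \<in> V" if "i \<le> n" for i
  proof (cases i)
    case 0 then show ?thesis using q assms(4) by simp
  next
    case (Suc j)
    then show ?thesis using q(3)[of j] assms(1) that by auto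
  qed
  obtain F1 where F1: "F1 0 = w1" "\<And>m. F1 m \<in> V \<and> (F1 m, F1 (Suc m)) \<in> E"
    using fwd_path[OF assms(2,1), of w1] w(1) assms(1) by blast
  obtain F2 where F2: "F2 0 = w2" "\<And>m. F2 m \<in> V \<and> (F2 m, F2 (Suc m)) \<in> E"
    using fwd_path[OF assms(2,1), of w2] w(2) assms(1) by blast
  have mk: "\<forall>m. (if m \<le> n then q m else F (m - n - 1)) \<in> V \<and>
      ((if m \<le> n then q m else F (m - n - 1)), (if Suc m \<le> n then q (Suc m) else F (Suc m - n - 1))) \<in> E"
    if F: "F 0 = w" "\<And>m. F m \<in> V \<and> (F m, F (Suc m)) \<in> E" "(v, w) \<in> E" for F w
  proof
    fix m
    consider "m < n" | "m = n" | "m > n" by linarith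
    then show "(if m \<le> n then q m else F (m - n - 1)) \<in> V \<and>
      ((if m \<le> n then q m else F (m - n - 1)), (if Suc m \<le> n then q (Suc m) else F (Suc m - n - 1))) \<in> E"
    proof cases
      case 1 then show ?thesis using q(3)[of m] qV[of m] by auto
    next
      case 2 then show ?thesis using q(2) qV[of m] F by auto
    next
      case 3
      then have "Suc m - n - 1 = Suc (m - n - 1)" by simp
      then show ?thesis using 3 F(2)[of "m - n - 1"] by auto
    qed
  qed
  define P1 where "P1 m = (if m \<le> n then q m else F1 (m - n - 1))" for m
  define P2 where "P2 m = (if m \<le> n then q m else F2 (m - n - 1))" for m
  have p1: "\<forall>m. P1 m \<in> V \<and> (P1 m, P1 (Suc m)) \<in> E"
    using mk[OF F1 w(1)] unfolding P1_def by blast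
  have p2: "\<forall>m. P2 m \<in> V \<and> (P2 m, P2 (Suc m)) \<in> E"
    using mk[OF F2 w(2)] unfolding P2_def by blast
  have p0: "P1 0 = u" "P2 0 = u" by (simp_all add: P1_def P2_def q(1))
  have "P1 (Suc n) \<noteq> P2 (Suc n)" using F1(1) F2(1) w(3) by (simp add: P1_def P2_def)
  then show ?thesis using p0 p1 p2 by blast
qed

lemma splice:
  assumes "\<omega> \<in> bi_paths V E" "P 0 = \<omega> N" "\<And>n. P n \<in> V \<and> (P n, P (Suc n)) \<in> E"
  shows "(\<lambda>i. if i \<le> N then \<omega> i else P (nat (i - N))) \<in> bi_paths V E"
  unfolding bi_paths_def
proof (intro CollectI conjI allI)
  fix i :: int
  show "(if i \<le> N then \<omega> i else P (nat (i - N))) \<in> V"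
    using assms(1,3) unfolding bi_paths_def by auto
  consider "i < N" | "i = N" | "i > N" by linarith
  then show "(if i \<le> N then \<omega> i else P (nat (i - N)), if i + 1 \<le> N then \<omega> (i + 1) else P (nat (i + 1 - N))) \<in> E"
  proof cases
    case 1 then show ?thesis using assms(1) unfolding bi_paths_def by auto
  next
    case 2 then show ?thesis using assms(2) assms(3)[of 0] by simp
  next
    case 3
    then have "nat (i + 1 - N) = Suc (nat (i - N))" by simp
    then show ?thesis using 3 assms(3)[of "nat (i - N)"] by simp
  qed
qed

lemma deviate:
  assumes "E \<subseteq> V \<times> V" "strongly_connected_single V E" "\<exists>v\<in>V. out_degree E v \<ge> 2"
    "\<omega> \<in> bi_paths V E"
  shows "\<exists>\<omega>'\<in>bi_paths V E. (\<forall>i\<le>N. \<omega>' i = \<omega> i) \<and> (\<exists>m>N. \<omega>' m \<noteq> \<omega> m)"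
proof -
  have "\<omega> N \<in> V" using assms(4) unfolding bi_paths_def by auto
  then obtain P1 P2 k where P: "P1 0 = \<omega> N" "P2 0 = \<omega> N" "\<forall>n. P1 n \<in> V \<and> (P1 n, P1 (Suc n)) \<in> E"
     "\<forall>n. P2 n \<in> V \<and> (P2 n, P2 (Suc n)) \<in> E" "P1 k \<noteq> P2 k"
    using branch[OF assms(1-3)] by blast
  have "k > 0" using P(1,2,5) by (cases k) auto
  define m where "m = N + int k"
  have m: "m > N" "nat (m - N) = k" using \<open>k > 0\<close> by (auto simp: m_def)
  define w1 where "w1 = (\<lambda>i. if i \<le> N then \<omega> i else P1 (nat (i - N)))"
  define w2 where "w2 = (\<lambda>i. if i \<le> N then \<omega> i else P2 (nat (i - N)))"
  have b1: "w1 \<in> bi_paths V E" unfolding w1_def by (rule splice[OF assms(4)]) (use P in auto)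
  have b2: "w2 \<in> bi_paths V E" unfolding w2_def by (rule splice[OF assms(4)]) (use P in auto)
  have agree1: "\<forall>i\<le>N. w1 i = \<omega> i" by (simp add: w1_def)
  have agree2: "\<forall>i\<le>N. w2 i = \<omega> i" by (simp add: w2_def)
  have "w1 m \<noteq> w2 m" using m P(5) by (simp add: w1_def w2_def)
  then have "w1 m \<noteq> \<omega> m \<or> w2 m \<noteq> \<omega> m" by (cases "w1 m = \<omega> m") auto
  then show ?thesis
  proof
    assume a: "w1 m \<noteq> \<omega> m"
    have "(\<forall>i\<le>N. w1 i = \<omega> i) \<and> (\<exists>m'>N. w1 m' \<noteq> \<omega> m')"
      using agree1 a m(1) by blast
    then show ?thesis using b1 by (rule_tac bexI[of _ w1])
  next
    assume a: "w2 m \<noteq> \<omega> m"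
    have "(\<forall>i\<le>N. w2 i = \<omega> i) \<and> (\<exists>m'>N. w2 m' \<noteq> \<omega> m')"
      using agree2 a m(1) by blast
    then show ?thesis using b2 by (rule_tac bexI[of _ w2])
  qed
qed

lemma bar_rep:
  assumes "xb \<in> Delta_bar V E h" "h > 0"
  shows "xb s = xb (real_of_int \<lfloor>s / h\<rfloor> * h)"
proof -
  let ?n = "\<lfloor>s / h\<rfloor>"
  have "real_of_int ?n \<le> s / h" "s / h < real_of_int ?n + 1" by linarith+
  have "real_of_int ?n * h \<le> s / h * h"
    by (rule mult_right_mono) (use assms(2) \<open>real_of_int ?n \<le> s / h\<close> in auto)
  then have a: "real_of_int ?n * h \<le> s" using assms(2) by simp
  have "s / h * h < (real_of_int ?n + 1) * h"
    by (rule mult_strict_right_mono) (use assms(2) \<open>s / h < real_of_int ?n + 1\<close> in auto)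
  then have "real_of_int ?n * h \<le> s" "s < real_of_int (?n + 1) * h" using a assms(2) by auto
  then show ?thesis using assms(1) unfolding Delta_bar_def by blast
qed

lemma floor_block:
  assumes "h > 0" "0 \<le> s" "s < h"
  shows "\<lfloor>(s + real_of_int m * h) / h\<rfloor> = m"
proof -
  have "(s + real_of_int m * h) / h = s / h + real_of_int m" using assms(1) by (simp add: field_simps)
  moreover have "0 \<le> s / h" "s / h < 1" using assms by auto
  ultimately show ?thesis by (simp add: floor_eq_iff)
qed

lemma main_step:
  fixes V :: "'v set" and E :: "('v \<times> 'v) set" and h :: real and x :: "real \<Rightarrow> 'v" and e :: real
  assumes "finite V" and "E \<subseteq> V \<times> V" and "h > 0"
    and "strongly_connected_single V E"
    and "\<exists>v\<in>V. out_degree E v \<ge> 2"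
    and xD: "x \<in> Delta V E h" and e: "e > 0"
  shows "\<exists>y\<in>Delta V E h. dist_Delta h x y < e \<and> (\<exists>t::real. t > 0 \<and> (1/2::real) < dist_Delta h (psi t x) (psi t y))"
proof -
  obtain xb t0 where xb: "x = (\<lambda>s. xb (s + t0))" "xb \<in> Delta_bar V E h"
    using xD unfolding Delta_def by blast
  define \<omega> where "\<omega> i = xb (real_of_int i * h)" for i
  have \<omega>: "\<omega> \<in> bi_paths V E" using xb(2) unfolding Delta_bar_def \<omega>_def by simp
  have xrep: "x s = \<omega> \<lfloor>(s + t0) / h\<rfloor>" for s
    using bar_rep[OF xb(2) assms(3)] xb(1) \<omega>_def by simp
  obtain L :: nat where L: "(1/2::real) ^ L < e / 2" using real_arch_pow_inv[of "e/2" "1/2"] e(1) by auto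
  define c where "c = \<lceil>\<bar>t0\<bar> / h\<rceil>"
  have c: "\<bar>t0\<bar> \<le> real_of_int c * h" "0 \<le> c"
  proof -
    have "\<bar>t0\<bar> / h \<le> real_of_int c" unfolding c_def by linarith
    then show "\<bar>t0\<bar> \<le> real_of_int c * h" using assms(3) by (simp add: field_simps)
    have "0 \<le> \<bar>t0\<bar> / h" using assms(3) by simp
    then show "0 \<le> c" unfolding c_def by linarith
  qed
  define N where "N = int L + c + 1"
  obtain \<omega>' m where \<omega>': "\<omega>' \<in> bi_paths V E" "\<And>i. i \<le> N \<Longrightarrow> \<omega>' i = \<omega> i" "m > N" "\<omega>' m \<noteq> \<omega> m"
    using deviate[OF assms(2,4,5) \<omega>, of N] by blast
  define yb where "yb s = \<omega>' \<lfloor>s / h\<rfloor>" for s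
  define y where "y = (\<lambda>s. yb (s + t0))"
  have ybD: "yb \<in> Delta_bar V E h"
    unfolding Delta_bar_def
  proof (intro CollectI conjI allI impI)
    fix n :: int and t assume t: "real_of_int n * h \<le> t \<and> t < real_of_int (n + 1) * h"
    have "\<lfloor>t / h\<rfloor> = n"
    proof -
      have "real_of_int n \<le> t / h" "t / h < real_of_int n + 1"
        using t assms(3) by (auto simp: field_simps)
      then show ?thesis by (simp add: floor_eq_iff)
    qed
    then show "yb t = yb (real_of_int n * h)" using assms(3) by (simp add: yb_def)
  next
    show "(\<lambda>i. yb (real_of_int i * h)) \<in> bi_paths V E"
      using \<omega>'(1) assms(3) by (simp add: yb_def)
  qed
  have "\<exists>x' t'. (\<lambda>s. yb (s + t0)) = (\<lambda>s. x' (s + t')) \<and> x' \<in> Delta_bar V E h"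
    by (intro exI[of _ yb] exI[of _ t0]) (simp add: ybD)
  then have yD: "y \<in> Delta V E h" unfolding Delta_def y_def by simp
  have yrep: "y s = \<omega>' \<lfloor>(s + t0) / h\<rfloor>" for s by (simp add: y_def yb_def)
  have "dist_Delta h x y \<le> 2 * (1/2) ^ L"
  proof (rule dist_small[OF assms(3)])
    fix i s assume i: "i < int L" "real_of_int i * h \<le> s" "s \<le> real_of_int (i + 1) * h"
    have "real_of_int (i + 1) * h \<le> real_of_int (int L) * h"
      using i(1) assms(3) by (intro mult_right_mono) auto
    then have "s + t0 < (real_of_int L + real_of_int c + 1) * h"
      using i(3) c(1) assms(3) by (simp add: algebra_simps)
    then have "(s + t0) / h < real_of_int N + 1"
      using assms(3) by (simp add: N_def field_simps)
    then have "\<lfloor>(s + t0) / h\<rfloor> \<le> N" by linarith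
    then show "x s = y s" using xrep yrep \<omega>'(2) by simp
  qed
  then have "dist_Delta h x y < e" using L by simp
  define t where "t = real_of_int m * h - t0"
  have "real_of_int c * h < real_of_int m * h"
    using \<omega>'(3) assms(3) unfolding N_def by (intro mult_strict_right_mono) auto
  then have tpos: "t > 0" using c(1) unfolding t_def by linarith
  have "dist_Delta h (psi t x) (psi t y) \<ge> 1"
  proof (rule dist_ge1[OF assms(3)])
    fix s assume s: "0 \<le> s" "s < h"
    have "s + t + t0 = s + real_of_int m * h" by (simp add: t_def)
    then have "\<lfloor>(s + t + t0) / h\<rfloor> = m" using floor_block[OF assms(3) s, of m] by metis
    then show "psi t x s \<noteq> psi t y s" using xrep yrep \<omega>'(4) by (simp add: psi_def)
  qed
  then have "\<exists>t>0. 1/2 < dist_Delta h (psi t x) (psi t y)"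
    using tpos by (intro exI[of _ t]) auto
  then show ?thesis using yD \<open>dist_Delta h x y < e\<close> by blast
qed

theorem mainTheorem11:
  fixes V :: "'v set" and E :: "('v \<times> 'v) set" and h :: real
  assumes "finite V" and "E \<subseteq> V \<times> V" and "h > 0"
    and "strongly_connected_single V E"
    and "\<exists>v\<in>V. out_degree E v \<ge> 2"
  shows "sensitive_dependence (Delta V E h) (dist_Delta h) psi"
  unfolding sensitive_dependence_def
proof (rule exI[of _ "1/2::real"], rule conjI)
  show "(0::real) < 1/2" by simp
  show "\<forall>x\<in>Delta V E h. \<forall>B. (\<exists>e>0. {y \<in> Delta V E h. dist_Delta h x y < e} \<subseteq> B) \<longrightarrow>
        (\<exists>y\<in>B \<inter> Delta V E h. \<exists>t>0. 1/2 < dist_Delta h (psi t x) (psi t y))"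
  proof (rule ballI, rule allI, rule impI)
    fix x B assume xD: "x \<in> Delta V E h" and "\<exists>e>0. {y \<in> Delta V E h. dist_Delta h x y < e} \<subseteq> B"
    then obtain e where e: "e > 0" "{y \<in> Delta V E h. dist_Delta h x y < e} \<subseteq> B" by blast
    obtain y where y: "y \<in> Delta V E h" "dist_Delta h x y < e" "\<exists>t>0. 1/2 < dist_Delta h (psi t x) (psi t y)"
      using main_step[OF assms xD e(1)] by blast
    have "y \<in> B \<inter> Delta V E h" using y(1,2) e(2) by blast
    then show "\<exists>y\<in>B \<inter> Delta V E h. \<exists>t>0. 1/2 < dist_Delta h (psi t x) (psi t y)"
      using y(3) by blast
  qed
qed

end
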